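(* For every point $(w,z)\in\mathbb{R}^2$ there exist sequences $(p_n)_{n\ge1}$, $(q_n)_{n\ge1}$, $(\gamma_n)_{n\ge1}$ such that: (1) $(p_n)$ and $(q_n)$ are increasing sequences of rational numbers converging to $w$ and $z$ respectively; (2) each $\gamma_n$ is a positive rational number; (3) setting $\Delta_n:=p_{n+1}-p_n$, we have $0<\Delta_n<1$ and $q_{n+1}=q_n+\Delta_n(1+\gamma_n)$ for all $n$; (4) $\lim_{n\to\infty}\gamma_n/(\Delta_n)^{n-1}=0$. *)

theory Defs
  imports "HOL-Analysis.Analysis"
begin

end

theory Submission
  imports Defs
begin

lemma approx_seq:
  fixes x :: real and r :: "nat \<Rightarrow> real"
  assumes "\<And>n. r n > 0"
  obtains f where "\<And>n. f n \<in> \<rat>" "\<And>n. x - 2*r n < f n" "\<And>n. f n < x - r n"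
proof -
  have "\<forall>n. \<exists>y. y \<in> \<rat> \<and> x - 2*r n < y \<and> y < x - r n"
  proof
    fix n
    have "x - 2*r n < x - r n" using assms[of n] by simp
    then obtain y where "y \<in> \<rat>" "x - 2*r n < y" "y < x - r n"
      using Rats_dense_in_real by blast
    then show "\<exists>y. y \<in> \<rat> \<and> x - 2*r n < y \<and> y < x - r n" by blast
  qed
  then obtain f where f: "\<forall>n. f n \<in> \<rat> \<and> x - 2*r n < f n \<and> f n < x - r n"
    by (rule choice[THEN exE])
  show ?thesis by (rule that[of f]) (use f in auto)
qed

lemma approx_lim:
  fixes x :: real
  assumes "\<And>n. x - 2*r n < f n" "\<And>n. f n < x - r n" "r \<longlonglongrightarrow> 0"
  shows "f \<longlonglongrightarrow> x"
proof -
  have a: "(\<lambda>n. x - 2 * r n) \<longlonglongrightarrow> x - 2 * 0"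
    by (intro tendsto_intros assms(3))
  have b: "(\<lambda>n. x - r n) \<longlonglongrightarrow> x - 0"
    by (intro tendsto_intros assms(3))
  show ?thesis
    apply (rule tendsto_sandwich[OF _ _ a[simplified] b[simplified]])
     apply (rule always_eventually, rule allI, rule less_imp_le, rule assms(1))
    apply (rule always_eventually, rule allI, rule less_imp_le, rule assms(2))
    done
qed

theorem lemma5p5:
  fixes w z :: real
  shows "\<exists>p q \<gamma> :: nat \<Rightarrow> real.
    (\<forall>n\<ge>1. p n \<in> \<rat> \<and> q n \<in> \<rat> \<and> \<gamma> n \<in> \<rat>) \<and>
    (\<forall>n\<ge>1. p n < p (Suc n) \<and> q n < q (Suc n)) \<and>
    p \<longlonglongrightarrow> w \<and> q \<longlonglongrightarrow> z \<and>
    (\<forall>n\<ge>1. \<gamma> n > 0) \<and>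
    (\<forall>n\<ge>1. 0 < p (Suc n) - p n \<and> p (Suc n) - p n < 1 \<and>
              q (Suc n) = q n + (p (Suc n) - p n) * (1 + \<gamma> n)) \<and>
    (\<lambda>n. \<gamma> n / (p (Suc n) - p n) ^ (n - 1)) \<longlonglongrightarrow> 0"
proof -
  define r1 :: "nat \<Rightarrow> real" where "r1 n = 1 / 3^n" for n
  define r2 :: "nat \<Rightarrow> real" where "r2 n = 1 / 3^(n*(n+2))" for n
  have r1p: "\<And>n. r1 n > 0" and r2p: "\<And>n. r2 n > 0" by (auto simp: r1_def r2_def)
  obtain p where p: "\<And>n. p n \<in> \<rat>" "\<And>n. w - 2*r1 n < p n" "\<And>n. p n < w - r1 n"
    by (rule approx_seq[of r1 w], rule r1p, blast)
  obtain t where t: "\<And>n. t n \<in> \<rat>" "\<And>n. (z - w) - 2*r2 n < t n" "\<And>n. t n < (z - w) - r2 n"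
    by (rule approx_seq[of r2 "z - w"], rule r2p, blast)
  define q where "q n = p n + t n" for n
  define \<gamma> where "\<gamma> n = (t (Suc n) - t n) / (p (Suc n) - p n)" for n
  have r1S: "r1 (Suc n) = r1 n / 3" for n by (simp add: r1_def)
  have r2S: "r2 (Suc n) * 3 \<le> r2 n" for n
  proof -
    have "(3::real)^(n*(n+2)) * 3 \<le> 3^(Suc n * (Suc n + 2))"
    proof -
      have "(3::real)^(n*(n+2)) * 3 = 3^(n*(n+2)+1)" by simp
      also have "\<dots> \<le> 3^(Suc n * (Suc n + 2))" by (rule power_increasing) auto
      finally show ?thesis .
    qed
    then show ?thesis unfolding r2_def by (simp add: field_simps)
  qed
  have dp_lo: "p (Suc n) - p n > r1 n / 3" for n
    using p(2)[of "Suc n"] p(3)[of n] r1S[of n] by linarith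
  have dp_hi: "p (Suc n) - p n < 2 * r1 n" for n
    using p(3)[of "Suc n"] p(2)[of n] r1p[of "Suc n"] by linarith
  have dt_lo: "t (Suc n) - t n > 0" for n
    using t(2)[of "Suc n"] t(3)[of n] r2S[of n] r2p[of "Suc n"] by linarith
  have dt_hi: "t (Suc n) - t n < 2 * r2 n" for n
    using t(3)[of "Suc n"] t(2)[of n] r2p[of "Suc n"] by linarith
  have dpos: "p (Suc n) - p n > 0" for n using dp_lo[of n] r1p[of n] by linarith
  have r1lim: "r1 \<longlonglongrightarrow> 0" unfolding r1_def
    by (intro LIMSEQ_inverse_realpow_zero[simplified inverse_eq_divide]) simp
  have r2le: "r2 n \<le> r1 n" for n
    unfolding r1_def r2_def by (intro divide_left_mono power_increasing) auto
  have r2lim: "r2 \<longlonglongrightarrow> 0"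
    apply (rule tendsto_sandwich[of "\<lambda>_. 0" _ _ r1])
       apply (rule always_eventually, rule allI, rule less_imp_le, rule r2p)
      apply (rule always_eventually, rule allI, rule r2le)
     apply simp
    apply (rule r1lim)
    done
  have plim: "p \<longlonglongrightarrow> w" by (rule approx_lim[OF p(2,3) r1lim])
  have tlim: "t \<longlonglongrightarrow> z - w" by (rule approx_lim[OF t(2,3) r2lim])
  have qlim: "q \<longlonglongrightarrow> z"
  proof -
    have "q \<longlonglongrightarrow> w + (z - w)" unfolding q_def[abs_def] by (intro tendsto_intros plim tlim)
    then show ?thesis by simp
  qed
  have rats: "\<forall>n\<ge>1. p n \<in> \<rat> \<and> q n \<in> \<rat> \<and> \<gamma> n \<in> \<rat>"
    using p(1) t(1) by (auto simp: q_def \<gamma>_def)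
  have mono: "\<forall>n\<ge>1. p n < p (Suc n) \<and> q n < q (Suc n)"
  proof (intro allI impI conjI)
    fix n :: nat
    show "p n < p (Suc n)" using dpos[of n] by simp
    show "q n < q (Suc n)" using dpos[of n] dt_lo[of n] by (simp add: q_def)
  qed
  have gpos: "\<forall>n\<ge>1. \<gamma> n > 0" using dpos dt_lo by (auto simp: \<gamma>_def)
  have r1le: "r1 n \<le> 1/3" if "n \<ge> 1" for n
  proof -
    have "(3::real)^1 \<le> 3^n" by (rule power_increasing) (use that in auto)
    then show ?thesis unfolding r1_def by (simp add: field_simps)
  qed
  have rec: "\<forall>n\<ge>1. 0 < p (Suc n) - p n \<and> p (Suc n) - p n < 1 \<and>
              q (Suc n) = q n + (p (Suc n) - p n) * (1 + \<gamma> n)"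
  proof (intro allI impI conjI)
    fix n :: nat assume n: "n \<ge> 1"
    show "0 < p (Suc n) - p n" by (rule dpos)
    show "p (Suc n) - p n < 1" using dp_hi[of n] r1le[OF n] by linarith
    show "q (Suc n) = q n + (p (Suc n) - p n) * (1 + \<gamma> n)"
      using dpos[of n] by (simp add: q_def \<gamma>_def field_simps)
  qed
  have lim: "(\<lambda>n. \<gamma> n / (p (Suc n) - p n) ^ (n - 1)) \<longlonglongrightarrow> 0"
  proof (rule tendsto_sandwich[of "\<lambda>_. 0" _ _ "\<lambda>n. 2 * r1 n"])
    show "\<forall>\<^sub>F n in sequentially. 0 \<le> \<gamma> n / (p (Suc n) - p n) ^ (n - 1)"
      using dpos dt_lo by (auto simp: \<gamma>_def intro!: always_eventually divide_nonneg_nonneg less_imp_le)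
    show "((\<lambda>n. 2 * r1 n) \<longlonglongrightarrow> 0)" using tendsto_mult_right_zero[OF r1lim, of 2] by simp
    show "(\<lambda>n. 0) \<longlonglongrightarrow> (0::real)" by simp
    show "\<forall>\<^sub>F n in sequentially. \<gamma> n / (p (Suc n) - p n) ^ (n - 1) \<le> 2 * r1 n"
    proof (rule eventually_sequentiallyI[of 1])
      fix n :: nat assume n: "n \<ge> 1"
      define D where "D = p (Suc n) - p n"
      have Dp: "D > 0" using dpos by (simp add: D_def)
      have eq: "\<gamma> n / D ^ (n - 1) = (t (Suc n) - t n) / D ^ n"
      proof -
        have "D ^ n = D * D ^ (n - 1)" using n by (cases n) auto
        then show ?thesis using Dp by (simp add: \<gamma>_def D_def)
      qed
      have Dlo: "D \<ge> 1 / 3^(n+1)" using dp_lo[of n] by (simp add: D_def r1_def)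
      have "(1 / 3^(n+1)) ^ n \<le> D ^ n"
        by (rule power_mono[OF Dlo]) simp
      hence Dn: "1 / 3^((n+1)*n) \<le> D ^ n" by (metis power_divide power_one power_mult)
      have "(t (Suc n) - t n) / D ^ n \<le> 2 * r2 n / (1 / 3^((n+1)*n))"
        using dt_hi[of n] dt_lo[of n] Dn
        by (intro frac_le) auto
      also have "\<dots> = 2 * r1 n"
      proof -
        have "n*(n+2) = (n+1)*n + n" by (simp add: algebra_simps)
        then have "(3::real)^(n*(n+2)) = 3^((n+1)*n) * 3^n" by (simp add: power_add)
        then show ?thesis by (simp add: r1_def r2_def)
      qed
      finally show "\<gamma> n / (p (Suc n) - p n) ^ (n - 1) \<le> 2 * r1 n"
        using eq by (simp add: D_def)
    qed
  qed
  show ?thesis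
    apply (rule exI[of _ p], rule exI[of _ q], rule exI[of _ \<gamma>])
    apply (intro conjI)
    by (rule rats, rule mono, rule plim, rule qlim, rule gpos, rule rec, rule lim)
qed

end
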